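(* Let $F$ be a free non-abelian group and let $\mathcal K$ be the class of coordinate groups $F_{R(U)}$ of finite systems $U(X)=1$ over $F$ such that every equation $T(X,Y)=1$ over $F$ compatible with $U=1$ admits a $U$-lift. Let $G=F_{R(S)}\in\mathcal K$ and let $H$ be a finitely generated subgroup of $G$ with $F\le H$ such that there is a retraction $\phi:G\to H$ (a homomorphism with $\phi|_H=\mathrm{id}_H$). Then $H=F_{R(U)}$ for some finite system $U=1$ over $F$ and every equation compatible with $U=1$ admits a $U$-lift; in particular $H\in\mathcal K$.
   Context: $F[X]=F*F(X)$; $R(U)$ is the intersection of kernels of all $F$-homomorphisms $F[X]\to F$ killing $U$; $F_{R(U)}=F[X]/R(U)$ with canonical map $\mu:X\to F_{R(U)}$. $T(X,Y)=1$ is compatible with $U=1$ if for every solution $X_0$ of $U=1$ in $F$, $T(X_0,Y)=1$ has a solution in $F$; it admits a $U$-lift if $T(X^\mu,Y)=1$ has a solution in $F_{R(U)}$. *)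

theory Defs
  imports "HOL-Algebra.Algebra"
begin

type_synonym 'g word = "(bool \<times> 'g) list"
  (* (True, g) is the letter g, (False, g) is g^-1 *)

fun reduced :: "'g word \<Rightarrow> bool" where
  "reduced [] = True"
| "reduced [a] = True"
| "reduced (a # b # w) = (\<not> (snd a = snd b \<and> fst a \<noteq> fst b) \<and> reduced (b # w))"

fun push :: "bool \<times> 'g \<Rightarrow> 'g word \<Rightarrow> 'g word" where
  "push a [] = [a]"
| "push a (b # bs) = (if snd a = snd b \<and> fst a \<noteq> fst b then bs else a # b # bs)"

definition reduce :: "'g word \<Rightarrow> 'g word" where
  "reduce w = foldr push w []"

definition free_group :: "'g set \<Rightarrow> 'g word monoid" where
  "free_group A = \<lparr> carrier = {w. reduced w \<and> snd ` set w \<subseteq> A},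
                    monoid.mult = (\<lambda>x y. reduce (x @ y)), one = [] \<rparr>"

definition Fgrp :: "'c word monoid" where
  "Fgrp = free_group UNIV"

text \<open>F[X] = F * F(X) for X = {x_0,...,x_(n-1)}: free group on constants Inl c and variables Inr i, i < n.\<close>
definition FX :: "nat \<Rightarrow> ('c + nat) word monoid" where
  "FX n = free_group (range Inl \<union> Inr ` {..<n})"

definition const_word :: "'c word \<Rightarrow> ('c + nat) word" where
  "const_word w = map (\<lambda>(b, c). (b, Inl c)) w"

definition F_hom :: "nat \<Rightarrow> (('c + nat) word \<Rightarrow> 'c word) \<Rightarrow> bool" where
  "F_hom n h \<longleftrightarrow> h \<in> hom (FX n) Fgrp \<and> (\<forall>w \<in> carrier Fgrp. h (const_word w) = w)"

definition Rad :: "nat \<Rightarrow> ('c + nat) word set \<Rightarrow> ('c + nat) word set" where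
  "Rad n U = {w \<in> carrier (FX n). \<forall>h. F_hom n h \<and> (\<forall>u \<in> U. h u = \<one>\<^bsub>Fgrp\<^esub>)
                                       \<longrightarrow> h w = \<one>\<^bsub>Fgrp\<^esub>}"

definition coord :: "nat \<Rightarrow> ('c + nat) word set \<Rightarrow> ('c + nat) word set monoid" where
  "coord n U = FX n Mod Rad n U"

definition canF :: "nat \<Rightarrow> ('c + nat) word set \<Rightarrow> 'c word \<Rightarrow> ('c + nat) word set" where
  "canF n U w = Rad n U #>\<^bsub>FX n\<^esub> const_word w"

definition mu :: "nat \<Rightarrow> ('c + nat) word set \<Rightarrow> nat \<Rightarrow> ('c + nat) word set" where
  "mu n U i = Rad n U #>\<^bsub>FX n\<^esub> [(True, Inr i)]"

definition word_eval :: "('a, 'b) monoid_scheme \<Rightarrow> ('g \<Rightarrow> 'a) \<Rightarrow> 'g word \<Rightarrow> 'a" where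
  "word_eval G f w = foldr (\<lambda>(b, g) acc. (if b then f g else inv\<^bsub>G\<^esub> (f g)) \<otimes>\<^bsub>G\<^esub> acc) w \<one>\<^bsub>G\<^esub>"

text \<open>Value of an equation w (over F, in variables Inr i) in an F-group G, where iota : F -> G is
  the structure map and val assigns values to the variables.\<close>
definition eqn_eval :: "('a, 'b) monoid_scheme \<Rightarrow> ('c word \<Rightarrow> 'a) \<Rightarrow> (nat \<Rightarrow> 'a)
                         \<Rightarrow> ('c + nat) word \<Rightarrow> 'a" where
  "eqn_eval G iota val w = word_eval G (case_sum (\<lambda>c. iota [(True, c)]) val) w"

text \<open>T(X,Y) with X = x_0..x_(n-1), Y = x_n..x_(n+m-1); T is an element of F[X,Y] = FX (n+m).\<close>
definition compatible :: "nat \<Rightarrow> ('c + nat) word set \<Rightarrow> nat \<Rightarrow> ('c + nat) word \<Rightarrow> bool" where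
  "compatible n U m T \<longleftrightarrow>
     (\<forall>X0. (\<forall>i<n. X0 i \<in> carrier Fgrp) \<and> (\<forall>u \<in> U. eqn_eval Fgrp id X0 u = \<one>\<^bsub>Fgrp\<^esub>) \<longrightarrow>
        (\<exists>Y0. (\<forall>i. n \<le> i \<and> i < n + m \<longrightarrow> Y0 i \<in> carrier Fgrp) \<and>
              eqn_eval Fgrp id (\<lambda>i. if i < n then X0 i else Y0 i) T = \<one>\<^bsub>Fgrp\<^esub>))"

definition admits_lift :: "nat \<Rightarrow> ('c + nat) word set \<Rightarrow> nat \<Rightarrow> ('c + nat) word \<Rightarrow> bool" where
  "admits_lift n U m T \<longleftrightarrow>
     (\<exists>Y0. (\<forall>i. n \<le> i \<and> i < n + m \<longrightarrow> Y0 i \<in> carrier (coord n U)) \<and>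
           eqn_eval (coord n U) (canF n U) (\<lambda>i. if i < n then mu n U i else Y0 i) T
             = \<one>\<^bsub>coord n U\<^esub>)"

definition lift_property :: "nat \<Rightarrow> ('c + nat) word set \<Rightarrow> bool" where
  "lift_property n U \<longleftrightarrow>
     (\<forall>m T. T \<in> carrier (FX (n + m)) \<and> compatible n U m T \<longrightarrow> admits_lift n U m T)"

definition finite_system :: "nat \<Rightarrow> ('c + nat) word set \<Rightarrow> bool" where
  "finite_system n U \<longleftrightarrow> finite U \<and> U \<subseteq> carrier (FX n)"

end

theory Submission
  imports Defs
begin


definition invl :: "bool \<times> 'g \<Rightarrow> bool \<times> 'g" where "invl a = (\<not> fst a, snd a)"

lemma reduced_Cons: "reduced (a # w) \<longleftrightarrow> reduced w \<and> (w = [] \<or> \<not> (snd a = snd (hd w) \<and> fst a \<noteq> fst (hd w)))"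
  by (cases w) auto

lemma reduced_push: "reduced w \<Longrightarrow> reduced (push a w)"
  by (cases "(a,w)" rule: push.cases) (auto simp: reduced_Cons)

lemma set_push: "set (push a w) \<subseteq> insert a (set w)"
  by (cases "(a,w)" rule: push.cases) auto

lemma reduced_foldr: "reduced w \<Longrightarrow> reduced (foldr push r w)"
  by (induction r) (auto intro: reduced_push)

lemma set_foldr: "set (foldr push r w) \<subseteq> set r \<union> set w"
  by (induction r) (use set_push in fastforce)+

lemma reduced_reduce: "reduced (reduce w)"
  unfolding reduce_def by (rule reduced_foldr) simp

lemma reduce_append: "reduce (x @ y) = foldr push x (reduce y)"
  by (simp add: reduce_def)

lemma reduce_Cons: "reduce (a # y) = push a (reduce y)"
  by (simp add: reduce_def)

lemma reduce_reduced: "reduced w \<Longrightarrow> reduce w = w"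
proof (induction w)
  case Nil then show ?case by (simp add: reduce_def)
next
  case (Cons a w)
  then have "reduce w = w" by (simp add: reduced_Cons)
  with Cons.prems show ?case by (cases w) (auto simp: reduce_Cons)
qed

lemma push_push_inv: "reduced w \<Longrightarrow> push a (push (invl a) w) = w"
proof (cases w)
  case Nil then show ?thesis by (auto simp: invl_def)
next
  case (Cons b bs)
  assume r: "reduced w"
  show ?thesis
  proof (cases "snd (invl a) = snd b \<and> fst (invl a) \<noteq> fst b")
    case True
    then show ?thesis using r Cons
      by (cases bs) (auto simp: invl_def prod_eq_iff)
  next
    case False
    then show ?thesis using Cons by (auto simp: invl_def)
  qed
qed

lemma push_inv_push: "reduced w \<Longrightarrow> push (invl a) (push a w) = w"
  using push_push_inv[of w "invl a"] by (simp add: invl_def)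

lemma foldr_push_push: "reduced w \<Longrightarrow> foldr push (push c r) w = push c (foldr push r w)"
proof (cases "(c, r)" rule: push.cases)
  case (1 a)
  then show ?thesis by simp
next
  case (2 a b bs)
  assume w: "reduced w"
  show ?thesis
  proof (cases "snd a = snd b \<and> fst a \<noteq> fst b")
    case True
    then have "b = invl c" using 2 by (cases b, cases c) (auto simp: invl_def)
    then show ?thesis using 2 True
      by (simp add: push_push_inv reduced_foldr w)
  next
    case False then show ?thesis using 2 by auto
  qed
qed

lemma foldr_foldr: "reduced w \<Longrightarrow> foldr push (foldr push a r) w = foldr push a (foldr push r w)"
  by (induction a) (auto simp: foldr_push_push reduced_foldr)

lemma reduce_reduce_left: "reduce (reduce x @ y) = reduce (x @ y)"
  using foldr_foldr[of "reduce y" x "[]"] reduced_reduce[of y] by (simp add: reduce_append reduce_def)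

lemma reduce_reduce_right: "reduce (x @ reduce y) = reduce (x @ y)"
  by (simp add: reduce_append reduce_reduced reduced_reduce)

definition invw :: "'g word \<Rightarrow> 'g word" where "invw w = rev (map invl w)"

lemma foldr_invw: "reduced r \<Longrightarrow> foldr push w (foldr push (invw w) r) = r"
proof (induction w arbitrary: r)
  case Nil then show ?case by (simp add: invw_def)
next
  case (Cons c w)
  have "foldr push (c # w) (foldr push (invw (c # w)) r)
      = push c (foldr push w (foldr push (invw w) (push (invl c) r)))"
    by (simp add: invw_def)
  also have "\<dots> = push c (push (invl c) r)"
    using Cons by (simp add: reduced_push)
  also have "\<dots> = r" using Cons.prems by (simp add: push_push_inv)
  finally show ?case .
qed

lemma invw_invw: "invw (invw w) = w"
  by (simp add: invw_def rev_map comp_def invl_def)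

lemma reduce_inv_left: "reduced x \<Longrightarrow> reduce (invw x @ x) = []"
proof -
  assume x: "reduced x"
  have "reduce (invw x @ x) = foldr push (invw x) x"
    by (simp add: reduce_append reduce_reduced x)
  also have "\<dots> = foldr push (invw x) (foldr push (invw (invw x)) [])"
    using reduce_reduced[OF x] by (simp add: invw_invw reduce_def)
  also have "\<dots> = []" by (rule foldr_invw) simp
  finally show ?thesis .
qed

lemma set_reduce: "set (reduce w) \<subseteq> set w"
  unfolding reduce_def using set_foldr[of w "[]"] by simp

lemma carrier_free_group: "carrier (free_group A) = {w. reduced w \<and> snd ` set w \<subseteq> A}"
  by (simp add: free_group_def)

lemma mult_free_group: "x \<otimes>\<^bsub>free_group A\<^esub> y = reduce (x @ y)"
  by (simp add: free_group_def)

lemma one_free_group: "\<one>\<^bsub>free_group A\<^esub> = []"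
  by (simp add: free_group_def)

lemma group_free_group: "group (free_group A)"
proof (rule groupI)
  fix x y assume "x \<in> carrier (free_group A)" "y \<in> carrier (free_group A)"
  then show "x \<otimes>\<^bsub>free_group A\<^esub> y \<in> carrier (free_group A)"
    using set_reduce[of "x @ y"]
    by (auto simp: carrier_free_group mult_free_group reduced_reduce) force
next
  show "\<one>\<^bsub>free_group A\<^esub> \<in> carrier (free_group A)"
    by (simp add: carrier_free_group one_free_group)
next
  fix x y z
  show "x \<otimes>\<^bsub>free_group A\<^esub> y \<otimes>\<^bsub>free_group A\<^esub> z = x \<otimes>\<^bsub>free_group A\<^esub> (y \<otimes>\<^bsub>free_group A\<^esub> z)"
    by (simp add: mult_free_group reduce_reduce_left reduce_reduce_right)
next
  fix x assume "x \<in> carrier (free_group A)"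
  then show "\<one>\<^bsub>free_group A\<^esub> \<otimes>\<^bsub>free_group A\<^esub> x = x"
    by (simp add: carrier_free_group mult_free_group one_free_group reduce_reduced)
next
  fix x assume x: "x \<in> carrier (free_group A)"
  show "\<exists>y\<in>carrier (free_group A). y \<otimes>\<^bsub>free_group A\<^esub> x = \<one>\<^bsub>free_group A\<^esub>"
  proof (intro bexI)
    show "reduce (invw x) \<otimes>\<^bsub>free_group A\<^esub> x = \<one>\<^bsub>free_group A\<^esub>"
      using x by (simp add: carrier_free_group mult_free_group one_free_group reduce_reduce_left reduce_inv_left)
    show "reduce (invw x) \<in> carrier (free_group A)"
      using x set_reduce[of "invw x"]
      by (auto simp: carrier_free_group reduced_reduce invw_def invl_def) force
  qed
qed




definition lv :: "('a, 'b) monoid_scheme \<Rightarrow> ('g \<Rightarrow> 'a) \<Rightarrow> bool \<times> 'g \<Rightarrow> 'a" where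
  "lv G f a = (if fst a then f (snd a) else inv\<^bsub>G\<^esub> (f (snd a)))"

lemma word_eval_Nil[simp]: "word_eval G f [] = \<one>\<^bsub>G\<^esub>"
  by (simp add: word_eval_def)

lemma word_eval_Cons: "word_eval G f (a # w) = lv G f a \<otimes>\<^bsub>G\<^esub> word_eval G f w"
  by (cases a) (simp add: word_eval_def lv_def)

lemma lv_closed: "group G \<Longrightarrow> f (snd a) \<in> carrier G \<Longrightarrow> lv G f a \<in> carrier G"
  by (simp add: lv_def group.inv_closed)

lemma word_eval_closed:
  "group G \<Longrightarrow> (\<forall>x \<in> snd ` set w. f x \<in> carrier G) \<Longrightarrow> word_eval G f w \<in> carrier G"
  by (induction w) (auto simp: word_eval_Cons lv_closed group.is_monoid monoid.m_closed)

lemma word_eval_append: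
  assumes "group G" "\<forall>x \<in> snd ` set (x @ y). f x \<in> carrier G"
  shows "word_eval G f (x @ y) = word_eval G f x \<otimes>\<^bsub>G\<^esub> word_eval G f y"
  using assms
proof (induction x)
  case Nil then show ?case by (simp add: word_eval_closed group.is_monoid)
next
  case (Cons a x)
  then show ?case
    by (simp add: word_eval_Cons group.is_monoid monoid.m_assoc lv_closed word_eval_closed)
qed

lemma word_eval_push:
  assumes G: "group G" and c: "\<forall>x \<in> snd ` set (a # w). f x \<in> carrier G"
  shows "word_eval G f (push a w) = word_eval G f (a # w)"
proof (cases w)
  case Nil then show ?thesis by simp
next
  case (Cons b bs)
  show ?thesis
  proof (cases "snd a = snd b \<and> fst a \<noteq> fst b")
    case True
    have fa: "f (snd a) \<in> carrier G" using c by auto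
    have bs: "word_eval G f bs \<in> carrier G" using c Cons by (intro word_eval_closed[OF G]) auto
    have "lv G f a \<otimes>\<^bsub>G\<^esub> lv G f b = \<one>\<^bsub>G\<^esub>"
      using True fa G by (cases "fst a") (auto simp: lv_def group.l_inv group.r_inv)
    then have "word_eval G f (a # w) = word_eval G f bs"
      using Cons G fa bs
      by (simp add: word_eval_Cons lv_closed True group.is_monoid monoid.m_assoc[symmetric]
             del: monoid.m_assoc)
    then show ?thesis using Cons True by simp
  next
    case False then show ?thesis using Cons by auto
  qed
qed

lemma word_eval_foldr:
  assumes G: "group G"
  shows "\<forall>x \<in> snd ` set (r @ w). f x \<in> carrier G \<Longrightarrow> word_eval G f (foldr push r w) = word_eval G f (r @ w)"
proof (induction r)
  case Nil then show ?case by simp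
next
  case (Cons a r)
  have "word_eval G f (foldr push (a # r) w) = word_eval G f (push a (foldr push r w))" by simp
  also have "\<dots> = word_eval G f (a # foldr push r w)"
    using Cons.prems set_foldr[of r w] by (intro word_eval_push[OF G]) auto
  also have "\<dots> = word_eval G f (a # r @ w)"
    using Cons by (simp add: word_eval_Cons)
  finally show ?case by simp
qed

lemma word_eval_reduce:
  assumes G: "group G" and "\<forall>x \<in> snd ` set w. f x \<in> carrier G"
  shows "word_eval G f (reduce w) = word_eval G f w"
  using word_eval_foldr[OF G, of w "[]" f] assms by (simp add: reduce_def)

lemma word_eval_hom:
  assumes G: "group G" and f: "\<forall>x \<in> A. f x \<in> carrier G"
  shows "word_eval G f \<in> hom (free_group A) G"
proof (rule homI)
  fix x assume "x \<in> carrier (free_group A)"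
  then show "word_eval G f x \<in> carrier G"
    using f by (intro word_eval_closed[OF G]) (auto simp: carrier_free_group)
next
  fix x y assume "x \<in> carrier (free_group A)" "y \<in> carrier (free_group A)"
  then have c: "\<forall>z \<in> snd ` set (x @ y). f z \<in> carrier G" using f by (auto simp: carrier_free_group)
  show "word_eval G f (x \<otimes>\<^bsub>free_group A\<^esub> y) = word_eval G f x \<otimes>\<^bsub>G\<^esub> word_eval G f y"
    using c by (simp add: mult_free_group word_eval_reduce[OF G] word_eval_append[OF G])
qed

lemma word_eval_letter: "group G \<Longrightarrow> f x \<in> carrier G \<Longrightarrow> word_eval G f [(True, x)] = f x"
  by (simp add: word_eval_Cons lv_def group.is_monoid)

lemma word_eval_cong: "(\<And>x. x \<in> snd ` set w \<Longrightarrow> f x = g x) \<Longrightarrow> word_eval G f w = word_eval G g w"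
  by (induction w) (auto simp: word_eval_Cons lv_def)

lemma hom_word_eval:
  assumes G: "group G" and K: "group K" and h: "h \<in> hom G K"
    and f: "\<forall>x \<in> snd ` set w. f x \<in> carrier G"
  shows "h (word_eval G f w) = word_eval K (h \<circ> f) w"
  using f
proof (induction w)
  case Nil then show ?case using G K h by (simp add: group_hom.hom_one group_hom_def group_hom_axioms_def)
next
  case (Cons a w)
  interpret gh: group_hom G K h using G K h by (simp add: group_hom_def group_hom_axioms_def)
  have fa: "f (snd a) \<in> carrier G" using Cons by auto
  have "h (lv G f a) = lv K (\<lambda>a. h (f a)) a" using fa by (simp add: lv_def)
  then show ?case using Cons fa
    by (simp add: word_eval_Cons lv_closed[OF G] word_eval_closed[OF G])
qed

lemma inv_letter_free: "x \<in> A \<Longrightarrow> inv\<^bsub>free_group A\<^esub> [(True, x)] = [(False, x)]"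
proof -
  assume x: "x \<in> A"
  interpret group "free_group A" by (rule group_free_group)
  show ?thesis
    by (rule inv_equality) (use x in \<open>auto simp: carrier_free_group mult_free_group one_free_group reduce_def\<close>)
qed

lemma word_eval_id: "w \<in> carrier (free_group A) \<Longrightarrow> word_eval (free_group A) (\<lambda>x. [(True, x)]) w = w"
proof (induction w)
  case Nil then show ?case by (simp add: one_free_group)
next
  case (Cons a w)
  then have w: "w \<in> carrier (free_group A)" and ra: "reduced (a # w)" and aA: "snd a \<in> A"
    by (auto simp: carrier_free_group reduced_Cons)
  have "lv (free_group A) (\<lambda>x. [(True, x)]) a = [a]"
    using aA by (cases a) (auto simp: lv_def inv_letter_free)
  then have "word_eval (free_group A) (\<lambda>x. [(True, x)]) (a # w) = reduce ([a] @ w)"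
    using Cons.IH w by (simp add: word_eval_Cons mult_free_group)
  also have "\<dots> = a # w" using ra by (simp add: reduce_reduced)
  finally show ?case .
qed

lemma hom_determined:
  assumes K: "group K" and h: "h \<in> hom (free_group A) K" and w: "w \<in> carrier (free_group A)"
  shows "h w = word_eval K (\<lambda>x. h [(True, x)]) w"
proof -
  have "h w = h (word_eval (free_group A) (\<lambda>x. [(True, x)]) w)" using w by (simp add: word_eval_id)
  also have "\<dots> = word_eval K (h \<circ> (\<lambda>x. [(True, x)])) w"
    using w by (intro hom_word_eval[OF group_free_group K h]) (auto simp: carrier_free_group)
  finally show ?thesis by (simp add: comp_def)
qed

lemma word_eval_map: "word_eval G f (map (\<lambda>(b, c). (b, g c)) w) = word_eval G (f \<circ> g) w"
  by (induction w) (auto simp: word_eval_Cons lv_def)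




lemma normal_common_kernel:
  assumes G: "group G" and K: "group K" and hs: "\<And>z. P z \<Longrightarrow> hs z \<in> hom G K"
  shows "{w \<in> carrier G. \<forall>z. P z \<longrightarrow> hs z w = \<one>\<^bsub>K\<^esub>} \<lhd> G"
proof -
  interpret G: group G by (rule G)
  interpret K: group K by (rule K)
  have gh: "\<And>z. P z \<Longrightarrow> group_hom G K (hs z)"
    using hs G K by (simp add: group_hom_def group_hom_axioms_def)
  let ?N = "{w \<in> carrier G. \<forall>z. P z \<longrightarrow> hs z w = \<one>\<^bsub>K\<^esub>}"
  have sub: "subgroup ?N G"
  proof (rule G.subgroupI)
    show "?N \<subseteq> carrier G" by auto
    have "\<one>\<^bsub>G\<^esub> \<in> ?N" using gh group_hom.hom_one by fastforce
    then show "?N \<noteq> {}" by blast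
    fix a assume "a \<in> ?N"
    then show "inv\<^bsub>G\<^esub> a \<in> ?N" using gh group_hom.hom_inv by fastforce
  next
    fix a b assume "a \<in> ?N" "b \<in> ?N"
    then show "a \<otimes>\<^bsub>G\<^esub> b \<in> ?N" using gh group_hom.hom_mult by fastforce
  qed
  show ?thesis
    unfolding G.normal_inv_iff
  proof (intro conjI sub ballI)
    fix x h assume x: "x \<in> carrier G" and h: "h \<in> ?N"
    show "x \<otimes>\<^bsub>G\<^esub> h \<otimes>\<^bsub>G\<^esub> inv\<^bsub>G\<^esub> x \<in> ?N"
    proof (safe)
      show "x \<otimes>\<^bsub>G\<^esub> h \<otimes>\<^bsub>G\<^esub> inv\<^bsub>G\<^esub> x \<in> carrier G" using x h by auto
      fix z assume "P z"
      then interpret gh: group_hom G K "hs z" by (rule gh)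
      have hx: "hs z x \<in> carrier K" using x by simp
      show "hs z (x \<otimes>\<^bsub>G\<^esub> h \<otimes>\<^bsub>G\<^esub> inv\<^bsub>G\<^esub> x) = \<one>\<^bsub>K\<^esub>"
        using x h \<open>P z\<close> hx by simp
    qed
  qed
qed




definition AX :: "nat \<Rightarrow> ('c + nat) set" where "AX n = range Inl \<union> Inr ` {..<n}"

lemma FX_AX: "FX n = free_group (AX n)" by (simp add: FX_def AX_def)

lemma group_FX: "group (FX n)" by (simp add: FX_def group_free_group)
lemma group_Fgrp: "group Fgrp" by (simp add: Fgrp_def group_free_group)

lemma carrier_FX: "carrier (FX n) = {w. reduced w \<and> snd ` set w \<subseteq> AX n}"
  by (simp add: FX_AX carrier_free_group)
lemma mult_FX: "x \<otimes>\<^bsub>FX n\<^esub> y = reduce (x @ y)" by (simp add: FX_def mult_free_group)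
lemma one_FX: "\<one>\<^bsub>FX n\<^esub> = []" by (simp add: FX_def one_free_group)
lemma carrier_Fgrp: "carrier Fgrp = {w. reduced w}" by (simp add: Fgrp_def carrier_free_group)
lemma one_Fgrp: "\<one>\<^bsub>Fgrp\<^esub> = []" by (simp add: Fgrp_def one_free_group)

lemma letter_Fgrp: "[(b, c)] \<in> carrier Fgrp" by (simp add: carrier_Fgrp)
lemma letter_FX: "x \<in> AX n \<Longrightarrow> [(b, x)] \<in> carrier (FX n)" by (simp add: carrier_FX)
lemma Inl_AX[simp]: "Inl c \<in> AX n" by (simp add: AX_def)
lemma Inr_AX[simp]: "Inr i \<in> AX n \<longleftrightarrow> i < n" by (auto simp: AX_def)

lemma FX_mono: "n \<le> m \<Longrightarrow> carrier (FX n) \<subseteq> carrier (FX m)"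
  by (auto simp: carrier_FX AX_def)

abbreviation ev :: "(nat \<Rightarrow> 'c word) \<Rightarrow> ('c + nat) word \<Rightarrow> 'c word" where
  "ev X0 \<equiv> eqn_eval Fgrp id X0"

lemma ev_eq: "ev X0 w = word_eval Fgrp (case_sum (\<lambda>c. [(True, c)]) X0) w"
  by (simp add: eqn_eval_def)

definition sol :: "nat \<Rightarrow> ('c + nat) word set \<Rightarrow> (nat \<Rightarrow> 'c word) \<Rightarrow> bool" where
  "sol n U X0 \<longleftrightarrow> (\<forall>i<n. X0 i \<in> carrier Fgrp) \<and> (\<forall>u \<in> U. ev X0 u = [])"

lemma ev_hom:
  fixes X0 :: "nat \<Rightarrow> 'c word"
  shows "\<forall>i<n. X0 i \<in> carrier Fgrp \<Longrightarrow> ev X0 \<in> hom (FX n) Fgrp"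
proof -
  assume X: "\<forall>i<n. X0 i \<in> carrier Fgrp"
  have "word_eval Fgrp (case_sum (\<lambda>c. [(True, c)]) X0) \<in> hom (FX n) Fgrp"
    unfolding FX_AX
  proof (intro word_eval_hom[OF group_Fgrp] ballI)
    fix x :: "'c + nat" assume "x \<in> AX n"
    then show "case_sum (\<lambda>c. [(True, c)]) X0 x \<in> carrier Fgrp"
      using X by (cases x) (auto simp: AX_def letter_Fgrp)
  qed
  then show ?thesis by (simp add: ev_eq[abs_def])
qed

lemma ev_closed: "\<forall>i<n. X0 i \<in> carrier Fgrp \<Longrightarrow> w \<in> carrier (FX n) \<Longrightarrow> ev X0 w \<in> carrier Fgrp"
  by (rule hom_in_carrier[OF ev_hom])

lemma ev_const: "w \<in> carrier Fgrp \<Longrightarrow> ev X0 (const_word w) = w"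
proof -
  assume w: "w \<in> carrier Fgrp"
  have "ev X0 (const_word w) = word_eval Fgrp (case_sum (\<lambda>c. [(True, c)]) X0 \<circ> Inl) w"
    by (simp add: ev_eq const_word_def word_eval_map)
  also have "\<dots> = word_eval Fgrp (\<lambda>c. [(True, c)]) w" by (simp add: comp_def)
  also have "\<dots> = w" using w by (simp add: Fgrp_def word_eval_id)
  finally show ?thesis .
qed

lemma const_word_carrier: "w \<in> carrier Fgrp \<Longrightarrow> const_word w \<in> carrier (FX n)"
proof -
  assume "w \<in> carrier Fgrp"
  then have "reduced w" by (simp add: carrier_Fgrp)
  then have "reduced (const_word w)"
    unfolding const_word_def by (induction w rule: reduced.induct) auto
  then show ?thesis by (auto simp: carrier_FX const_word_def)
qed

lemma F_hom_ev: "\<forall>i<n. X0 i \<in> carrier Fgrp \<Longrightarrow> F_hom n (ev X0)"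
  by (simp add: F_hom_def ev_hom ev_const)

lemma F_hom_is_ev:
  assumes h: "F_hom n h" and w: "w \<in> carrier (FX n)"
  shows "h w = ev (\<lambda>i. h [(True, Inr i)]) w"
proof -
  have hh: "h \<in> hom (FX n) Fgrp" using h by (simp add: F_hom_def)
  have "h w = word_eval Fgrp (\<lambda>x. h [(True, x)]) w"
    using hom_determined[OF group_Fgrp hh[unfolded FX_AX]] w by (simp add: FX_AX)
  also have "\<dots> = word_eval Fgrp (case_sum (\<lambda>c. [(True, c)]) (\<lambda>i. h [(True, Inr i)])) w"
  proof (rule word_eval_cong)
    fix x assume "x \<in> snd ` set w"
    show "h [(True, x)] = case_sum (\<lambda>c. [(True, c)]) (\<lambda>i. h [(True, Inr i)]) x"
    proof (cases x)
      case (Inl c)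
      have "h (const_word [(True, c)]) = [(True, c)]"
        using h letter_Fgrp[of True c] unfolding F_hom_def by blast
      then show ?thesis using Inl by (simp add: const_word_def)
    qed simp
  qed
  finally show ?thesis by (simp add: ev_eq)
qed

lemma F_hom_vals: "F_hom n h \<Longrightarrow> i < n \<Longrightarrow> h [(True, Inr i)] \<in> carrier Fgrp"
  unfolding F_hom_def using letter_FX[of "Inr i" n True] hom_in_carrier by auto

lemma Rad_char:
  assumes U: "U \<subseteq> carrier (FX n)"
  shows "Rad n U = {w \<in> carrier (FX n). \<forall>X0. sol n U X0 \<longrightarrow> ev X0 w = []}"
proof safe
  fix w assume w: "w \<in> Rad n U"
  then show "w \<in> carrier (FX n)" by (simp add: Rad_def)
  fix X0 assume "sol n U X0"
  then show "ev X0 w = []" using w F_hom_ev[of n X0] by (auto simp: Rad_def sol_def one_Fgrp)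
next
  fix w assume w: "w \<in> carrier (FX n)" and all: "\<forall>X0. sol n U X0 \<longrightarrow> ev X0 w = []"
  show "w \<in> Rad n U" unfolding Rad_def
  proof (safe)
    fix h assume h: "F_hom n h" and k: "\<forall>u\<in>U. h u = \<one>\<^bsub>Fgrp\<^esub>"
    have "sol n U (\<lambda>i. h [(True, Inr i)])"
      unfolding sol_def
    proof (intro conjI allI impI ballI)
      fix i assume "i < n" then show "h [(True, Inr i)] \<in> carrier Fgrp" by (rule F_hom_vals[OF h])
    next
      fix u assume u: "u \<in> U"
      then have "u \<in> carrier (FX n)" using U by blast
      then have "h u = ev (\<lambda>i. h [(True, Inr i)]) u" by (rule F_hom_is_ev[OF h])
      then show "ev (\<lambda>i. h [(True, Inr i)]) u = []" using k u by (simp add: one_Fgrp)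
    qed
    then show "h w = \<one>\<^bsub>Fgrp\<^esub>" using all F_hom_is_ev[OF h w] by (simp add: one_Fgrp)
  qed (use w in auto)
qed

lemma Rad_normal:
  assumes U: "U \<subseteq> carrier (FX n)"
  shows "Rad n U \<lhd> FX n"
proof -
  have "{w \<in> carrier (FX n). \<forall>X0. sol n U X0 \<longrightarrow> ev X0 w = \<one>\<^bsub>Fgrp\<^esub>} \<lhd> FX n"
    by (rule normal_common_kernel[OF group_FX group_Fgrp]) (simp add: sol_def ev_hom)
  then show ?thesis by (simp add: Rad_char[OF U] one_Fgrp)
qed

lemma group_coord: "U \<subseteq> carrier (FX n) \<Longrightarrow> group (coord n U)"
  unfolding coord_def by (rule normal.factorgroup_is_group[OF Rad_normal])

lemma Rad_mono:
  assumes "U \<subseteq> carrier (FX n)" "V \<subseteq> carrier (FX n)" "U \<subseteq> V"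
  shows "Rad n U \<subseteq> Rad n V"
proof -
  have "\<And>X0. sol n V X0 \<Longrightarrow> sol n U X0" using assms(3) by (auto simp: sol_def)
  then show ?thesis by (auto simp: Rad_char assms(1,2))
qed

lemma U_in_Rad: "U \<subseteq> carrier (FX n) \<Longrightarrow> U \<subseteq> Rad n U"
  by (auto simp: Rad_char sol_def)




lemma carrier_coord: "carrier (coord n U) = rcosets\<^bsub>FX n\<^esub> (Rad n U)"
  by (simp add: coord_def FactGroup_def)

lemma one_coord: "\<one>\<^bsub>coord n U\<^esub> = Rad n U"
  by (simp add: coord_def)

lemma pi_hom: "U \<subseteq> carrier (FX n) \<Longrightarrow> (\<lambda>w. Rad n U #>\<^bsub>FX n\<^esub> w) \<in> hom (FX n) (coord n U)"
  unfolding coord_def by (rule normal.r_coset_hom_Mod[OF Rad_normal])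

lemma Rad_sub: "U \<subseteq> carrier (FX n) \<Longrightarrow> subgroup (Rad n U) (FX n)"
  by (rule normal_imp_subgroup[OF Rad_normal])

lemma coset_one_iff:
  assumes U: "U \<subseteq> carrier (FX n)" and w: "w \<in> carrier (FX n)"
  shows "(Rad n U #>\<^bsub>FX n\<^esub> w = Rad n U) \<longleftrightarrow> w \<in> Rad n U"
proof
  assume "Rad n U #>\<^bsub>FX n\<^esub> w = Rad n U"
  then show "w \<in> Rad n U" using group.rcos_self[OF group_FX w Rad_sub[OF U]] by simp
next
  assume "w \<in> Rad n U"
  then show "Rad n U #>\<^bsub>FX n\<^esub> w = Rad n U"
    by (rule subgroup.rcos_const[OF Rad_sub[OF U] group_FX])
qed

lemma coset_eq_imp:
  assumes U: "U \<subseteq> carrier (FX n)" and a: "a \<in> carrier (FX n)" and b: "b \<in> carrier (FX n)"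
    and eq: "Rad n U #>\<^bsub>FX n\<^esub> a = Rad n U #>\<^bsub>FX n\<^esub> b"
  shows "a \<otimes>\<^bsub>FX n\<^esub> inv\<^bsub>FX n\<^esub> b \<in> Rad n U"
proof -
  have "a \<in> Rad n U #>\<^bsub>FX n\<^esub> b" using group.rcos_self[OF group_FX a Rad_sub[OF U]] eq by simp
  then show ?thesis by (rule subgroup.rcos_module_imp[OF Rad_sub[OF U] group_FX b])
qed

lemma coord_elem: "C \<in> carrier (coord n U) \<Longrightarrow> \<exists>w\<in>carrier (FX n). C = Rad n U #>\<^bsub>FX n\<^esub> w"
  by (auto simp: carrier_coord RCOSETS_def)

lemma coset_in_coord: "U \<subseteq> carrier (FX n) \<Longrightarrow> w \<in> carrier (FX n) \<Longrightarrow> Rad n U #>\<^bsub>FX n\<^esub> w \<in> carrier (coord n U)"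
  by (rule hom_in_carrier[OF pi_hom])

lemma ev_letter:
  "case_sum (\<lambda>c. [(True, c)]) X0 x \<in> carrier Fgrp \<Longrightarrow> ev X0 [(True, x)] = case_sum (\<lambda>c. [(True, c)]) X0 x"
  by (simp add: ev_eq word_eval_letter[OF group_Fgrp])

lemma ev_letter_Inl: "ev X0 [(True, Inl c)] = [(True, c)]"
  using ev_letter[of X0 "Inl c"] letter_Fgrp[of True c] by simp

lemma ev_letter_Inr: "X0 i \<in> carrier Fgrp \<Longrightarrow> ev X0 [(True, Inr i)] = X0 i"
  using ev_letter[of X0 "Inr i"] by simp

lemma ev_cong_n:
  assumes "\<forall>i<n. X0 i = Y0 i" and "w \<in> carrier (FX n)"
  shows "ev X0 w = ev Y0 w"
proof -
  have "\<And>x. x \<in> snd ` set w \<Longrightarrow> case_sum (\<lambda>c. [(True, c)]) X0 x = case_sum (\<lambda>c. [(True, c)]) Y0 x"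
  proof -
    fix x assume "x \<in> snd ` set w"
    then have "x \<in> AX n" using assms(2) by (auto simp: carrier_FX)
    then show "case_sum (\<lambda>c. [(True, c)]) X0 x = case_sum (\<lambda>c. [(True, c)]) Y0 x"
      using assms(1) by (cases x) auto
  qed
  then show ?thesis unfolding ev_eq by (rule word_eval_cong)
qed

lemma group_eq_from_one:
  assumes "group G" "a \<in> carrier G" "b \<in> carrier G" "a \<otimes>\<^bsub>G\<^esub> inv\<^bsub>G\<^esub> b = \<one>\<^bsub>G\<^esub>"
  shows "a = b"
  using group.inv_solve_right[OF assms(1), of "\<one>\<^bsub>G\<^esub>" a b] assms
  by (simp add: group.is_monoid monoid.l_one)

lemma group_eq_from_one':
  assumes "group G" "a \<in> carrier G" "b \<in> carrier G" "inv\<^bsub>G\<^esub> a \<otimes>\<^bsub>G\<^esub> b = \<one>\<^bsub>G\<^esub>"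
  shows "a = b"
  using group.inv_solve_left[OF assms(1), of "\<one>\<^bsub>G\<^esub>" a b] assms
  by (simp add: group.is_monoid monoid.r_one)

lemma kernel_coset_image:
  assumes "group_hom G K h" "g \<in> carrier G"
  shows "h ` (kernel G K h #>\<^bsub>G\<^esub> g) = {h g}"
proof -
  interpret group_hom G K h by (rule assms(1))
  show ?thesis
  proof
    show "h ` (kernel G K h #>\<^bsub>G\<^esub> g) \<subseteq> {h g}"
    proof
      fix y assume "y \<in> h ` (kernel G K h #>\<^bsub>G\<^esub> g)"
      then obtain k where k: "k \<in> kernel G K h" and y: "y = h (k \<otimes>\<^bsub>G\<^esub> g)"
        unfolding r_coset_def by blast
      have "k \<in> carrier G" "h k = \<one>\<^bsub>K\<^esub>" using k by (auto simp: kernel_def)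
      then show "y \<in> {h g}" using y assms(2) by simp
    qed
    have "\<one>\<^bsub>G\<^esub> \<in> kernel G K h" by (simp add: kernel_def)
    then have "\<one>\<^bsub>G\<^esub> \<otimes>\<^bsub>G\<^esub> g \<in> kernel G K h #>\<^bsub>G\<^esub> g" unfolding r_coset_def by blast
    then show "{h g} \<subseteq> h ` (kernel G K h #>\<^bsub>G\<^esub> g)" using assms(2) by force
  qed
qed




theorem mainTheorem14:
  fixes S :: "('c + nat) word set" and n :: nat
    and H :: "('c + nat) word set set"
    and \<phi> :: "('c + nat) word set \<Rightarrow> ('c + nat) word set"
  assumes nonabelian: "\<exists>a b :: 'c. a \<noteq> b"
    and S_fin: "finite_system n S"
    and S_K: "lift_property n S"
    and H_sub: "subgroup H (coord n S)"
    and H_fg: "\<exists>A. finite A \<and> A \<subseteq> carrier (coord n S) \<and> H = generate (coord n S) A"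
    and F_le_H: "canF n S ` carrier Fgrp \<subseteq> H"
    and retr_hom: "\<phi> \<in> hom (coord n S) ((coord n S)\<lparr>carrier := H\<rparr>)"
    and retr_id: "\<forall>h \<in> H. \<phi> h = h"
  shows "\<exists>k U \<psi>. finite_system k U
            \<and> \<psi> \<in> iso (coord k U) ((coord n S)\<lparr>carrier := H\<rparr>)
            \<and> (\<forall>w \<in> carrier Fgrp. \<psi> (canF k U w) = canF n S w)
            \<and> lift_property k U"
proof -
  let ?R = "Rad n S"
  let ?G = "coord n S"
  let ?F = "FX n :: ('c + nat) word monoid"
  let ?pi = "\<lambda>w. ?R #>\<^bsub>?F\<^esub> w"
  have Ssub: "S \<subseteq> carrier ?F" using S_fin by (simp add: finite_system_def)
  interpret F: group ?F by (rule group_FX)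
  have GG: "group ?G" by (rule group_coord[OF Ssub])
  interpret G: group ?G by (rule GG)
  have HG: "H \<subseteq> carrier ?G" using H_sub by (rule subgroup.subset)
  have phi_H: "\<And>x. x \<in> carrier ?G \<Longrightarrow> \<phi> x \<in> H"
    using hom_in_carrier[OF retr_hom] by simp
  have phi_G: "\<phi> \<in> hom ?G ?G"
    using retr_hom HG unfolding hom_def by auto
  have piS: "?pi \<in> hom ?F ?G" by (rule pi_hom[OF Ssub])
  have piS_c: "\<And>w. w \<in> carrier ?F \<Longrightarrow> ?pi w \<in> carrier ?G" by (rule coset_in_coord[OF Ssub])
  have R_char: "?R = {w \<in> carrier ?F. \<forall>X0. sol n S X0 \<longrightarrow> ev X0 w = []}" by (rule Rad_char[OF Ssub])
  have R_one: "\<one>\<^bsub>?G\<^esub> = ?R" by (rule one_coord)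
  have R_H: "?R \<in> H" using subgroup.one_closed[OF H_sub] R_one by simp
  have phi_R: "\<phi> ?R = ?R" using R_H retr_id by blast
  have canF_letter: "\<And>c. canF n S [(True, c)] = ?pi [(True, Inl c)]"
    by (simp add: canF_def const_word_def)
  have letter_H: "\<And>c. ?pi [(True, Inl c)] \<in> H"
  proof -
    fix c
    have "canF n S [(True, c)] \<in> H" using F_le_H letter_Fgrp[of True c] by blast
    then show "?pi [(True, Inl c)] \<in> H" by (simp add: canF_letter)
  qed
  have "\<forall>i. \<exists>w. i < n \<longrightarrow> w \<in> carrier ?F \<and> \<phi> (mu n S i) = ?pi w"
  proof
    fix i
    show "\<exists>w. i < n \<longrightarrow> w \<in> carrier ?F \<and> \<phi> (mu n S i) = ?pi w"
    proof (cases "i < n")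
      case True
      have "mu n S i \<in> carrier ?G" unfolding mu_def using True by (intro piS_c letter_FX) simp
      then have "\<phi> (mu n S i) \<in> carrier ?G" using phi_H HG by blast
      then show ?thesis using coord_elem by blast
    qed simp
  qed
  then have "\<exists>p. \<forall>i. i < n \<longrightarrow> p i \<in> carrier ?F \<and> \<phi> (mu n S i) = ?pi (p i)" by (rule choice)
  then obtain p where p: "\<And>i. i < n \<Longrightarrow> p i \<in> carrier ?F \<and> \<phi> (mu n S i) = ?pi (p i)"
    by blast
  have p_c: "\<And>i. i < n \<Longrightarrow> p i \<in> carrier ?F" using p by blast
  define e where "e i = inv\<^bsub>?F\<^esub> [(True, Inr i)] \<otimes>\<^bsub>?F\<^esub> p i" for i
  have xi_c: "\<And>i. i < n \<Longrightarrow> [(True, Inr i)] \<in> carrier ?F" by (rule letter_FX) simp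
  have e_c: "\<And>i. i < n \<Longrightarrow> e i \<in> carrier ?F"
    unfolding e_def using p_c xi_c by simp
  define U where "U = S \<union> e ` {..<n}"
  have Usub: "U \<subseteq> carrier ?F" unfolding U_def using Ssub e_c by auto
  have U_fin: "finite_system n U" using S_fin Usub by (simp add: finite_system_def U_def)
  define gp where "gp = case_sum (\<lambda>c. [(True, Inl c)]) p"
  have gp_c: "\<And>x. x \<in> AX n \<Longrightarrow> gp x \<in> carrier ?F"
  proof -
    fix x :: "'c + nat" assume "x \<in> AX n"
    then show "gp x \<in> carrier ?F" unfolding gp_def using p_c by (cases x) (auto intro: letter_FX)
  qed
  define sp where "sp = word_eval ?F gp"
  have sp_hom: "sp \<in> hom ?F ?F"
    unfolding sp_def using gp_c by (subst (1) FX_AX) (intro word_eval_hom[OF group_FX] ballI)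
  have sp_c: "\<And>w. w \<in> carrier ?F \<Longrightarrow> sp w \<in> carrier ?F" by (rule hom_in_carrier[OF sp_hom])
  have phi_sp: "\<And>w. w \<in> carrier ?F \<Longrightarrow> \<phi> (?pi w) = ?pi (sp w)"
  proof -
    fix w assume w: "w \<in> carrier ?F"
    have h1: "\<phi> \<circ> ?pi \<in> hom ?F ?G" by (rule hom_compose[OF piS phi_G])
    have h2: "?pi \<circ> sp \<in> hom ?F ?G" by (rule hom_compose[OF sp_hom piS])
    have "(\<phi> \<circ> ?pi) w = word_eval ?G (\<lambda>x. (\<phi> \<circ> ?pi) [(True, x)]) w"
      using hom_determined[OF GG h1[unfolded FX_AX]] w by (simp add: FX_AX)
    also have "\<dots> = word_eval ?G (\<lambda>x. (?pi \<circ> sp) [(True, x)]) w"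
    proof (rule word_eval_cong)
      fix x assume "x \<in> snd ` set w"
      then have x: "x \<in> AX n" using w by (auto simp: carrier_FX)
      have spx: "sp [(True, x)] = gp x"
        unfolding sp_def using gp_c[OF x] by (rule word_eval_letter[OF group_FX])
      show "(\<phi> \<circ> ?pi) [(True, x)] = (?pi \<circ> sp) [(True, x)]"
      proof (cases x)
        case (Inl c)
        then show ?thesis using spx letter_H retr_id by (simp add: gp_def)
      next
        case (Inr i)
        then have "i < n" using x by simp
        then show ?thesis using spx p Inr by (simp add: gp_def mu_def)
      qed
    qed
    also have "\<dots> = (?pi \<circ> sp) w"
      using hom_determined[OF GG h2[unfolded FX_AX]] w by (simp add: FX_AX)
    finally show "\<phi> (?pi w) = ?pi (sp w)" by simp
  qed
  have ev_sp: "\<And>X0 w. \<forall>i<n. X0 i \<in> carrier Fgrp \<Longrightarrow> w \<in> carrier ?F \<Longrightarrow>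
      ev X0 (sp w) = ev (\<lambda>i. ev X0 (p i)) w"
  proof -
    fix X0 :: "nat \<Rightarrow> 'c word" and w
    assume X0: "\<forall>i<n. X0 i \<in> carrier Fgrp" and w: "w \<in> carrier ?F"
    have wl: "\<forall>x \<in> snd ` set w. gp x \<in> carrier ?F" using w gp_c by (auto simp: carrier_FX)
    have "ev X0 (sp w) = word_eval Fgrp (ev X0 \<circ> gp) w"
      unfolding sp_def by (rule hom_word_eval[OF group_FX group_Fgrp ev_hom[OF X0] wl])
    also have "\<dots> = ev (\<lambda>i. ev X0 (p i)) w"
      unfolding ev_eq[of "\<lambda>i. ev X0 (p i)"]
    proof (rule word_eval_cong)
      fix x assume "x \<in> snd ` set w"
      then have x: "x \<in> AX n" using w by (auto simp: carrier_FX)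
      show "(ev X0 \<circ> gp) x = case_sum (\<lambda>c. [(True, c)]) (\<lambda>i. ev X0 (p i)) x"
      proof (cases x)
        case (Inl c)
        then show ?thesis unfolding gp_def comp_def using ev_letter_Inl[of X0 c] by simp
      next
        case (Inr i)
        then show ?thesis unfolding gp_def comp_def by simp
      qed
    qed
    finally show "ev X0 (sp w) = ev (\<lambda>i. ev X0 (p i)) w" .
  qed
  have S_R: "S \<subseteq> ?R" by (rule U_in_Rad[OF Ssub])
  have R_ev: "\<And>X0 w. sol n S X0 \<Longrightarrow> w \<in> ?R \<Longrightarrow> ev X0 w = []"
    using R_char by blast
  have mu_c: "\<And>i. i < n \<Longrightarrow> mu n S i \<in> carrier ?G"
    unfolding mu_def using xi_c piS_c by blast
  define Yf where "Yf X0 = (\<lambda>i. ev X0 (p i))" for X0 :: "nat \<Rightarrow> 'c word"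
  have Yf_c: "\<And>X0 i. sol n S X0 \<Longrightarrow> i < n \<Longrightarrow> Yf X0 i \<in> carrier Fgrp"
    unfolding Yf_def sol_def using p_c ev_closed by blast
  have solS_Yf: "\<And>X0. sol n S X0 \<Longrightarrow> sol n S (Yf X0)"
  proof -
    fix X0 assume X0: "sol n S X0"
    have X0c: "\<forall>i<n. X0 i \<in> carrier Fgrp" using X0 by (simp add: sol_def)
    have "\<forall>u\<in>S. ev (Yf X0) u = []"
    proof
      fix u assume u: "u \<in> S"
      then have uc: "u \<in> carrier ?F" using Ssub by blast
      have "?pi (sp u) = \<phi> (?pi u)" using phi_sp[OF uc] by simp
      also have "?pi u = ?R" using coset_one_iff[OF Ssub uc] u S_R by blast
      finally have "?pi (sp u) = ?R" using phi_R by simp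
      then have "sp u \<in> ?R" using coset_one_iff[OF Ssub sp_c[OF uc]] by blast
      then have "ev X0 (sp u) = []" by (rule R_ev[OF X0])
      then show "ev (Yf X0) u = []" using ev_sp[OF X0c uc] by (simp add: Yf_def)
    qed
    then show "sol n S (Yf X0)" using Yf_c[OF X0] by (simp add: sol_def)
  qed
  have ev_e: "\<And>X0 i. \<forall>j<n. X0 j \<in> carrier Fgrp \<Longrightarrow> i < n \<Longrightarrow>
      ev X0 (e i) = inv\<^bsub>Fgrp\<^esub> (X0 i) \<otimes>\<^bsub>Fgrp\<^esub> ev X0 (p i)"
  proof -
    fix X0 :: "nat \<Rightarrow> 'c word" and i
    assume X0: "\<forall>j<n. X0 j \<in> carrier Fgrp" and i: "i < n"
    interpret gh: group_hom ?F Fgrp "ev X0"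
      using ev_hom[OF X0] group_Fgrp by (simp add: group_hom_def group_hom_axioms_def)
    show "ev X0 (e i) = inv\<^bsub>Fgrp\<^esub> (X0 i) \<otimes>\<^bsub>Fgrp\<^esub> ev X0 (p i)"
      unfolding e_def using xi_c[OF i] p_c[OF i] ev_letter_Inr[of X0 i] X0 i by simp
  qed
  have solU_Yf: "\<And>X0. sol n S X0 \<Longrightarrow> sol n U (Yf X0)"
  proof -
    fix X0 assume X0: "sol n S X0"
    have X0c: "\<forall>i<n. X0 i \<in> carrier Fgrp" using X0 by (simp add: sol_def)
    have Yc: "\<forall>i<n. Yf X0 i \<in> carrier Fgrp" using Yf_c[OF X0] by blast
    have "\<forall>i<n. ev (Yf X0) (e i) = []"
    proof (intro allI impI)
      fix i assume i: "i < n"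
      have "?pi (sp (p i)) = \<phi> (?pi (p i))" using phi_sp[OF p_c[OF i]] by simp
      also have "\<dots> = \<phi> (\<phi> (mu n S i))" using p[OF i] by simp
      also have "\<dots> = \<phi> (mu n S i)" using retr_id phi_H[OF mu_c[OF i]] by simp
      also have "\<dots> = ?pi (p i)" using p[OF i] by simp
      finally have "sp (p i) \<otimes>\<^bsub>?F\<^esub> inv\<^bsub>?F\<^esub> (p i) \<in> ?R"
        by (rule coset_eq_imp[OF Ssub sp_c[OF p_c[OF i]] p_c[OF i]])
      then have "ev X0 (sp (p i) \<otimes>\<^bsub>?F\<^esub> inv\<^bsub>?F\<^esub> (p i)) = []" by (rule R_ev[OF X0])
      moreover
      interpret gh: group_hom ?F Fgrp "ev X0"
        using ev_hom[OF X0c] group_Fgrp by (simp add: group_hom_def group_hom_axioms_def)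
      have "ev X0 (sp (p i) \<otimes>\<^bsub>?F\<^esub> inv\<^bsub>?F\<^esub> (p i)) = ev X0 (sp (p i)) \<otimes>\<^bsub>Fgrp\<^esub> inv\<^bsub>Fgrp\<^esub> ev X0 (p i)"
        using sp_c[OF p_c[OF i]] p_c[OF i] by simp
      ultimately have "ev X0 (sp (p i)) = ev X0 (p i)"
        using group_eq_from_one[OF group_Fgrp] ev_closed[OF X0c sp_c[OF p_c[OF i]]] ev_closed[OF X0c p_c[OF i]]
        by (simp add: one_Fgrp)
      then have evp: "ev (Yf X0) (p i) = Yf X0 i"
        using ev_sp[OF X0c p_c[OF i]] by (simp add: Yf_def)
      show "ev (Yf X0) (e i) = []"
        using ev_e[OF Yc i] evp Yf_c[OF X0 i] group.l_inv[OF group_Fgrp] by (simp add: one_Fgrp)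
    qed
    then show "sol n U (Yf X0)" using solS_Yf[OF X0] by (auto simp: sol_def U_def)
  qed
  have solU_fix: "\<And>X0 i. sol n U X0 \<Longrightarrow> i < n \<Longrightarrow> Yf X0 i = X0 i"
  proof -
    fix X0 i assume X0: "sol n U X0" and i: "i < n"
    have X0c: "\<forall>i<n. X0 i \<in> carrier Fgrp" using X0 by (simp add: sol_def)
    have "ev X0 (e i) = []" using X0 i by (simp add: sol_def U_def)
    then have "inv\<^bsub>Fgrp\<^esub> (X0 i) \<otimes>\<^bsub>Fgrp\<^esub> ev X0 (p i) = \<one>\<^bsub>Fgrp\<^esub>"
      using ev_e[OF X0c i] by (simp add: one_Fgrp)
    then have "X0 i = ev X0 (p i)"
      using group_eq_from_one'[OF group_Fgrp] X0c i ev_closed[OF X0c p_c[OF i]] by blast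
    then show "Yf X0 i = X0 i" by (simp add: Yf_def)
  qed
  have solU_S: "\<And>X0. sol n U X0 \<Longrightarrow> sol n S X0" by (auto simp: sol_def U_def)
  have RU_char: "Rad n U = {w \<in> carrier ?F. \<forall>X0. sol n U X0 \<longrightarrow> ev X0 w = []}" by (rule Rad_char[OF Usub])
  have key: "\<And>w. w \<in> carrier ?F \<Longrightarrow> sp w \<in> ?R \<longleftrightarrow> w \<in> Rad n U"
  proof -
    fix w assume w: "w \<in> carrier ?F"
    show "sp w \<in> ?R \<longleftrightarrow> w \<in> Rad n U"
    proof
      assume spw: "sp w \<in> ?R"
      have "\<forall>X0. sol n U X0 \<longrightarrow> ev X0 w = []"
      proof (intro allI impI)
        fix X0 assume X0: "sol n U X0"
        have X0c: "\<forall>i<n. X0 i \<in> carrier Fgrp" using X0 by (simp add: sol_def)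
        have "ev X0 w = ev (Yf X0) w"
          using solU_fix[OF X0] w by (intro ev_cong_n) auto
        also have "\<dots> = ev X0 (sp w)" using ev_sp[OF X0c w] by (simp add: Yf_def)
        also have "\<dots> = []" using R_ev[OF solU_S[OF X0] spw] .
        finally show "ev X0 w = []" .
      qed
      then show "w \<in> Rad n U" using w RU_char by blast
    next
      assume wU: "w \<in> Rad n U"
      have "\<forall>X0. sol n S X0 \<longrightarrow> ev X0 (sp w) = []"
      proof (intro allI impI)
        fix X0 assume X0: "sol n S X0"
        have X0c: "\<forall>i<n. X0 i \<in> carrier Fgrp" using X0 by (simp add: sol_def)
        have "ev X0 (sp w) = ev (Yf X0) w" using ev_sp[OF X0c w] by (simp add: Yf_def)
        also have "\<dots> = []" using wU solU_Yf[OF X0] RU_char by blast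
        finally show "ev X0 (sp w) = []" .
      qed
      then show "sp w \<in> ?R" using sp_c[OF w] R_char by blast
    qed
  qed
  let ?GH = "?G\<lparr>carrier := H\<rparr>"
  define h0 where "h0 w = \<phi> (?pi w)" for w
  have h0_hom: "h0 \<in> hom ?F ?GH"
    using hom_compose[OF piS retr_hom] by (simp add: h0_def[abs_def] comp_def)
  have GHgrp: "group ?GH" by (rule subgroup.subgroup_is_group[OF H_sub GG])
  interpret gh0: group_hom ?F ?GH h0
    using h0_hom GHgrp by (simp add: group_hom_def group_hom_axioms_def group_FX)
  have surj: "h0 ` carrier ?F = carrier ?GH"
  proof
    show "h0 ` carrier ?F \<subseteq> carrier ?GH" using hom_in_carrier[OF h0_hom] by blast
    show "carrier ?GH \<subseteq> h0 ` carrier ?F"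
    proof
      fix y assume "y \<in> carrier ?GH"
      then have y: "y \<in> H" by simp
      then have "y \<in> carrier ?G" using HG by blast
      then obtain w where w: "w \<in> carrier ?F" "y = ?pi w" using coord_elem by blast
      then have "h0 w = y" using y retr_id by (simp add: h0_def)
      then show "y \<in> h0 ` carrier ?F" using w by blast
    qed
  qed
  have ker: "kernel ?F ?GH h0 = Rad n U"
  proof -
    have "\<And>x. x \<in> carrier ?F \<Longrightarrow> h0 x = ?R \<longleftrightarrow> x \<in> Rad n U"
    proof -
      fix x assume x: "x \<in> carrier ?F"
      have "h0 x = ?pi (sp x)" using phi_sp[OF x] by (simp add: h0_def)
      then show "h0 x = ?R \<longleftrightarrow> x \<in> Rad n U"
        using coset_one_iff[OF Ssub sp_c[OF x]] key[OF x] by simp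
    qed
    moreover have "Rad n U \<subseteq> carrier ?F" using RU_char by blast
    ultimately show ?thesis unfolding kernel_def using R_one by auto
  qed
  define \<psi> where "\<psi> C = the_elem (h0 ` C)" for C
  have iso: "\<psi> \<in> iso (coord n U) ?GH"
  proof -
    have "(\<lambda>C. the_elem (h0 ` C)) \<in> iso (?F Mod kernel ?F ?GH h0) ?GH"
      by (rule gh0.FactGroup_iso_set[OF surj])
    then have "(\<lambda>C. the_elem (h0 ` C)) \<in> iso (?F Mod Rad n U) ?GH" by (simp only: ker)
    then show ?thesis by (simp add: coord_def \<psi>_def[abs_def])
  qed
  have psi_canF: "\<forall>w \<in> carrier Fgrp. \<psi> (canF n U w) = canF n S w"
  proof
    fix w :: "'c word" assume w: "w \<in> carrier Fgrp"
    have cw: "const_word w \<in> carrier ?F" by (rule const_word_carrier[OF w])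
    have "\<psi> (canF n U w) = the_elem (h0 ` (kernel ?F ?GH h0 #>\<^bsub>?F\<^esub> const_word w))"
      by (simp add: \<psi>_def canF_def ker)
    also have "\<dots> = h0 (const_word w)"
      using kernel_coset_image[OF gh0.group_hom_axioms cw] by simp
    also have "\<dots> = canF n S w"
      using F_le_H w retr_id by (auto simp: h0_def canF_def)
    finally show "\<psi> (canF n U w) = canF n S w" .
  qed
  have lift: "lift_property n U"
    unfolding lift_property_def
  proof (intro allI impI, elim conjE)
    fix m :: nat and T :: "('c + nat) word"
    assume Tc: "T \<in> carrier (FX (n + m))" and compT: "compatible n U m T"
    let ?Fm = "FX (n + m) :: ('c + nat) word monoid"
    have Tl: "\<And>x. x \<in> snd ` set T \<Longrightarrow> x \<in> AX (n+m)" using Tc by (auto simp: carrier_FX)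
    define gT where "gT = case_sum (\<lambda>c. [(True, Inl c)]) (\<lambda>i. if i < n then p i else [(True, Inr i)])"
    have gT_c: "\<And>x. x \<in> AX (n+m) \<Longrightarrow> gT x \<in> carrier ?Fm"
    proof -
      fix x :: "'c + nat" assume x: "x \<in> AX (n+m)"
      show "gT x \<in> carrier ?Fm"
      proof (cases x)
        case (Inl c) then show ?thesis by (simp add: gT_def letter_FX)
      next
        case (Inr i) then show ?thesis using x p_c FX_mono[of n "n+m"] by (auto simp: gT_def letter_FX)
      qed
    qed
    define T' where "T' = word_eval ?Fm gT T"
    have T'c: "T' \<in> carrier ?Fm" unfolding T'_def using gT_c Tl by (intro word_eval_closed[OF group_FX]) blast
    have T'l: "\<And>x. x \<in> snd ` set T' \<Longrightarrow> x \<in> AX (n+m)" using T'c by (auto simp: carrier_FX)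
    have compT': "compatible n S m T'"
      unfolding compatible_def
    proof (intro allI impI)
      fix X0 :: "nat \<Rightarrow> 'c word"
      assume "(\<forall>i<n. X0 i \<in> carrier Fgrp) \<and> (\<forall>u\<in>S. ev X0 u = \<one>\<^bsub>Fgrp\<^esub>)"
      then have X0: "sol n S X0" by (simp add: sol_def one_Fgrp)
      have X0c: "\<forall>i<n. X0 i \<in> carrier Fgrp" using X0 by (simp add: sol_def)
      have Y: "sol n U (Yf X0)" by (rule solU_Yf[OF X0])
      then have "(\<forall>i<n. Yf X0 i \<in> carrier Fgrp) \<and> (\<forall>u\<in>U. ev (Yf X0) u = \<one>\<^bsub>Fgrp\<^esub>)"
        by (simp add: sol_def one_Fgrp)
      then obtain Z where Zc: "\<forall>i. n \<le> i \<and> i < n + m \<longrightarrow> Z i \<in> carrier Fgrp"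
        and Zev: "ev (\<lambda>i. if i < n then Yf X0 i else Z i) T = \<one>\<^bsub>Fgrp\<^esub>"
        using compT unfolding compatible_def by blast
      define V where "V i = (if i < n then X0 i else Z i)" for i
      have Vc: "\<forall>i<n+m. V i \<in> carrier Fgrp" using X0c Zc by (simp add: V_def)
      have "ev V T' = word_eval Fgrp (ev V \<circ> gT) T"
        unfolding T'_def using gT_c Tl by (intro hom_word_eval[OF group_FX group_Fgrp ev_hom[OF Vc]]) blast
      also have "\<dots> = ev (\<lambda>i. if i < n then Yf X0 i else Z i) T"
        unfolding ev_eq[of "\<lambda>i. if i < n then Yf X0 i else Z i"]
      proof (rule word_eval_cong)
        fix x assume "x \<in> snd ` set T"
        then have x: "x \<in> AX (n+m)" by (rule Tl)
        show "(ev V \<circ> gT) x = case_sum (\<lambda>c. [(True, c)]) (\<lambda>i. if i < n then Yf X0 i else Z i) x"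
        proof (cases x)
          case (Inl c)
          then show ?thesis unfolding gT_def comp_def using ev_letter_Inl[of V c] by simp
        next
          case (Inr i)
          show ?thesis
          proof (cases "i < n")
            case True
            have "ev V (p i) = ev X0 (p i)" using p_c[OF True] by (intro ev_cong_n) (auto simp: V_def)
            then show ?thesis using Inr True unfolding gT_def comp_def by (simp add: Yf_def)
          next
            case False
            then have "i < n + m" using Inr x by simp
            then have "ev V [(True, Inr i)] = V i" using Vc by (intro ev_letter_Inr) simp
            then show ?thesis using Inr False unfolding gT_def comp_def by (simp add: V_def)
          qed
        qed
      qed
      finally have "ev V T' = \<one>\<^bsub>Fgrp\<^esub>" using Zev by simp
      then show "\<exists>Y0. (\<forall>i. n \<le> i \<and> i < n + m \<longrightarrow> Y0 i \<in> carrier Fgrp) \<and>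
                  ev (\<lambda>i. if i < n then X0 i else Y0 i) T' = \<one>\<^bsub>Fgrp\<^esub>"
        using Zc unfolding V_def by blast
    qed
    have "admits_lift n S m T'" using S_K T'c compT' unfolding lift_property_def by blast
    then obtain Y where Yc: "\<forall>i. n \<le> i \<and> i < n + m \<longrightarrow> Y i \<in> carrier ?G"
      and Yev: "eqn_eval ?G (canF n S) (\<lambda>i. if i < n then mu n S i else Y i) T' = \<one>\<^bsub>?G\<^esub>"
      unfolding admits_lift_def by blast
    have "\<forall>i. \<exists>w. n \<le> i \<and> i < n + m \<longrightarrow> w \<in> carrier ?F \<and> Y i = ?pi w"
    proof
      fix i
      show "\<exists>w. n \<le> i \<and> i < n + m \<longrightarrow> w \<in> carrier ?F \<and> Y i = ?pi w"
      proof (cases "n \<le> i \<and> i < n + m")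
        case True
        then have "Y i \<in> carrier ?G" using Yc by blast
        then show ?thesis using coord_elem by blast
      qed blast
    qed
    then have "\<exists>y. \<forall>i. n \<le> i \<and> i < n + m \<longrightarrow> y i \<in> carrier ?F \<and> Y i = ?pi (y i)" by (rule choice)
    then obtain y where y: "\<And>i. n \<le> i \<Longrightarrow> i < n + m \<Longrightarrow> y i \<in> carrier ?F \<and> Y i = ?pi (y i)" by blast
    define g0 where "g0 = case_sum (\<lambda>c. [(True, Inl c)]) (\<lambda>i. if i < n then [(True, Inr i)] else y i)"
    have g0_c: "\<And>x. x \<in> AX (n+m) \<Longrightarrow> g0 x \<in> carrier ?F"
    proof -
      fix x :: "'c + nat" assume x: "x \<in> AX (n+m)"
      show "g0 x \<in> carrier ?F"
      proof (cases x)
        case (Inl c) then show ?thesis by (simp add: g0_def letter_FX)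
      next
        case (Inr i) then show ?thesis using x y by (auto simp: g0_def letter_FX)
      qed
    qed
    define ev0 where "ev0 = word_eval ?F g0"
    have ev0_hom: "ev0 \<in> hom ?Fm ?F"
      unfolding ev0_def using g0_c by (subst (1) FX_AX) (intro word_eval_hom[OF group_FX] ballI)
    define W where "W = ev0 T'"
    have W_c: "W \<in> carrier ?F" unfolding W_def by (rule hom_in_carrier[OF ev0_hom T'c])
    have "?pi W = word_eval ?G (?pi \<circ> g0) T'"
      unfolding W_def ev0_def using g0_c T'l by (intro hom_word_eval[OF group_FX GG piS]) blast
    also have "\<dots> = eqn_eval ?G (canF n S) (\<lambda>i. if i < n then mu n S i else Y i) T'"
      unfolding eqn_eval_def
    proof (rule word_eval_cong)
      fix x assume "x \<in> snd ` set T'"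
      then have x: "x \<in> AX (n+m)" by (rule T'l)
      show "(?pi \<circ> g0) x = case_sum (\<lambda>c. canF n S [(True, c)]) (\<lambda>i. if i < n then mu n S i else Y i) x"
      proof (cases x)
        case (Inl c) then show ?thesis by (simp add: g0_def canF_letter)
      next
        case (Inr i)
        show ?thesis
        proof (cases "i < n")
          case True then show ?thesis using Inr by (simp add: g0_def mu_def)
        next
          case False
          then have "n \<le> i" "i < n + m" using Inr x by auto
          then show ?thesis using Inr False y by (simp add: g0_def)
        qed
      qed
    qed
    also have "\<dots> = ?R" using Yev R_one by simp
    finally have "W \<in> ?R" using coset_one_iff[OF Ssub W_c] by simp
    then have WU: "W \<in> Rad n U" using Rad_mono[OF Ssub Usub] U_def by blast
    have W_eq: "W = word_eval ?F (ev0 \<circ> gT) T"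
      unfolding W_def T'_def using gT_c Tl by (intro hom_word_eval[OF group_FX group_FX ev0_hom]) blast
    let ?RU = "Rad n U"
    let ?piU = "\<lambda>w. ?RU #>\<^bsub>?F\<^esub> w"
    have piU: "?piU \<in> hom ?F (coord n U)" by (rule pi_hom[OF Usub])
    have GU: "group (coord n U)" by (rule group_coord[OF Usub])
    have ev0_c: "\<And>x. x \<in> AX (n+m) \<Longrightarrow> ev0 (gT x) \<in> carrier ?F"
      using hom_in_carrier[OF ev0_hom gT_c] by blast
    have ev0_letter: "\<And>x. x \<in> AX (n+m) \<Longrightarrow> ev0 [(True, x)] = g0 x"
      unfolding ev0_def using g0_c by (rule word_eval_letter[OF group_FX])
    have ev0_p: "\<And>i. i < n \<Longrightarrow> ev0 (p i) = p i"
    proof -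
      fix i assume i: "i < n"
      have "ev0 (p i) = word_eval ?F (\<lambda>x. [(True, x)]) (p i)"
        unfolding ev0_def
      proof (rule word_eval_cong)
        fix x assume "x \<in> snd ` set (p i)"
        then have "x \<in> AX n" using p_c[OF i] by (auto simp: carrier_FX)
        then show "g0 x = [(True, x)]" by (cases x) (auto simp: g0_def)
      qed
      also have "\<dots> = p i" using p_c[OF i] word_eval_id[of "p i" "AX n"] by (simp add: FX_AX)
      finally show "ev0 (p i) = p i" .
    qed
    have piU_p: "\<And>i. i < n \<Longrightarrow> ?piU (p i) = ?piU [(True, Inr i)]"
    proof -
      fix i assume i: "i < n"
      have pe: "p i = [(True, Inr i)] \<otimes>\<^bsub>?F\<^esub> e i"
        unfolding e_def using xi_c[OF i] p_c[OF i] by (simp add: F.m_assoc[symmetric])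
      have "e i \<in> ?RU" using U_in_Rad[OF Usub] i by (auto simp: U_def)
      then have "?piU (e i) = \<one>\<^bsub>coord n U\<^esub>" using coset_one_iff[OF Usub e_c[OF i]] unfolding one_coord by simp
      moreover have "?piU (p i) = ?piU [(True, Inr i)] \<otimes>\<^bsub>coord n U\<^esub> ?piU (e i)"
        using pe hom_mult[OF piU xi_c[OF i] e_c[OF i]] by simp
      ultimately show "?piU (p i) = ?piU [(True, Inr i)]"
        using monoid.r_one[OF group.is_monoid[OF GU]] coset_in_coord[OF Usub xi_c[OF i]] by simp
    qed
    show "admits_lift n U m T"
      unfolding admits_lift_def
    proof (intro exI[of _ "\<lambda>i. ?piU (y i)"] conjI allI impI)
      fix i assume "n \<le> i \<and> i < n + m"
      then show "?piU (y i) \<in> carrier (coord n U)" using y coset_in_coord[OF Usub] by blast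
    next
      have "eqn_eval (coord n U) (canF n U) (\<lambda>i. if i < n then mu n U i else ?piU (y i)) T
          = word_eval (coord n U) (?piU \<circ> (ev0 \<circ> gT)) T"
        unfolding eqn_eval_def
      proof (rule word_eval_cong)
        fix x assume "x \<in> snd ` set T"
        then have x: "x \<in> AX (n+m)" by (rule Tl)
        show "case_sum (\<lambda>c. canF n U [(True, c)]) (\<lambda>i. if i < n then mu n U i else ?piU (y i)) x
              = (?piU \<circ> (ev0 \<circ> gT)) x"
        proof (cases x)
          case (Inl c)
          have "ev0 (gT x) = [(True, Inl c)]"
            using ev0_letter[OF x] Inl by (simp add: gT_def g0_def)
          moreover have "canF n U [(True, c)] = ?piU [(True, Inl c)]"
            by (simp add: canF_def const_word_def)
          ultimately show ?thesis using Inl by simp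
        next
          case (Inr i)
          show ?thesis
          proof (cases "i < n")
            case True
            have "ev0 (gT x) = p i" using ev0_p[OF True] Inr True by (simp add: gT_def)
            then have "(?piU \<circ> (ev0 \<circ> gT)) x = ?piU [(True, Inr i)]" using piU_p[OF True] by simp
            then show ?thesis using Inr True by (simp add: mu_def)
          next
            case False
            have "ev0 (gT x) = y i" using ev0_letter[OF x] Inr False by (simp add: gT_def g0_def)
            then show ?thesis using Inr False by simp
          qed
        qed
      qed
      also have "\<dots> = ?piU (word_eval ?F (ev0 \<circ> gT) T)"
        using ev0_c Tl by (intro hom_word_eval[OF group_FX GU piU, symmetric]) auto
      also have "\<dots> = ?piU W" using W_eq by simp
      also have "\<dots> = \<one>\<^bsub>coord n U\<^esub>" using coset_one_iff[OF Usub W_c] WU unfolding one_coord by simp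
      finally show "eqn_eval (coord n U) (canF n U) (\<lambda>i. if i < n then mu n U i else ?piU (y i)) T
          = \<one>\<^bsub>coord n U\<^esub>" .
    qed
  qed
  show ?thesis
    by (intro exI[of _ n] exI[of _ U] exI[of _ \<psi>] conjI U_fin iso psi_canF lift)
qed

end
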